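(* For any hypergraph $\mathcal{H}=(V,E)$ (with $V=\bigcup_{e\in E}e$): (1) $\kappa(\mathcal{H})\ge \tau^*(\mathsf{red}(\mathcal{H}))$; (2) $\kappa(\mathcal{H})\ge \rho^*(\mathsf{red}(\mathcal{H}))=\rho^*(\mathcal{H})$; (3) $\kappa(\mathcal{H})\le \psi^*(\mathcal{H})$.
   Context: For $S\subseteq V$, $\mathcal{H}[S]$ is the hypergraph with vertex set $S$ and edge set $\{S\cap e : e\in E,\ S\cap e\neq\emptyset\}$. The reduced hypergraph $\mathsf{red}(\mathcal{H})$ has the same vertex set and is obtained by removing every edge $e$ for which there is another edge $e'\neq e$ with $e\subseteq e'$. $\tau^*(\mathcal{H})$ is the value of a maximum fractional edge packing (nonnegative edge weights with $\sum_{e\ni v}u_e\le1$ for every vertex $v$), equivalently of a minimum fractional vertex cover. $\rho^*(\mathcal{H})$ is the value of a minimum fractional edge cover (nonnegative edge weights with $\sum_{e\ni v}u_e\ge1$ for every vertex $v$). The reduced quasi vertex-cover is $\kappa(\mathcal{H})=\max_{S\subseteq V}\tau^*(\mathsf{red}(\mathcal{H}[S]))$, and the edge quasi-packing is $\psi^*(\mathcal{H})=\max_{S\subseteq V}\tau^*(\mathcal{H}[S])$. *)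

theory Defs
  imports Main "HOL.Real"
begin

type_synonym 'a hypergraph = "'a set \<times> 'a set set"

definition verts :: "'a hypergraph \<Rightarrow> 'a set" where "verts H = fst H"
definition edges :: "'a hypergraph \<Rightarrow> 'a set set" where "edges H = snd H"

definition induced :: "'a hypergraph \<Rightarrow> 'a set \<Rightarrow> 'a hypergraph" where
  "induced H S = (S, {S \<inter> e | e. e \<in> edges H \<and> S \<inter> e \<noteq> {}})"

definition red :: "'a hypergraph \<Rightarrow> 'a hypergraph" where
  "red H = (verts H, {e \<in> edges H. \<not> (\<exists>e'\<in>edges H. e' \<noteq> e \<and> e \<subseteq> e')})"

definition frac_packing :: "'a hypergraph \<Rightarrow> ('a set \<Rightarrow> real) \<Rightarrow> bool" where
  "frac_packing H u \<longleftrightarrow> (\<forall>e\<in>edges H. u e \<ge> 0) \<and>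
     (\<forall>v\<in>verts H. (\<Sum>e\<in>{e\<in>edges H. v \<in> e}. u e) \<le> 1)"

definition frac_edge_cover :: "'a hypergraph \<Rightarrow> ('a set \<Rightarrow> real) \<Rightarrow> bool" where
  "frac_edge_cover H u \<longleftrightarrow> (\<forall>e\<in>edges H. u e \<ge> 0) \<and>
     (\<forall>v\<in>verts H. (\<Sum>e\<in>{e\<in>edges H. v \<in> e}. u e) \<ge> 1)"

definition tau_star :: "'a hypergraph \<Rightarrow> real" where
  "tau_star H = Sup {(\<Sum>e\<in>edges H. u e) | u. frac_packing H u}"

definition rho_star :: "'a hypergraph \<Rightarrow> real" where
  "rho_star H = Inf {(\<Sum>e\<in>edges H. u e) | u. frac_edge_cover H u}"

definition kappa :: "'a hypergraph \<Rightarrow> real" where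
  "kappa H = Max ((\<lambda>S. tau_star (red (induced H S))) ` Pow (verts H))"

definition psi_star :: "'a hypergraph \<Rightarrow> real" where
  "psi_star H = Max ((\<lambda>S. tau_star (induced H S)) ` Pow (verts H))"

definition hypergraph :: "'a hypergraph \<Rightarrow> bool" where
  "hypergraph H \<longleftrightarrow> finite (verts H) \<and> {} \<notin> edges H \<and> verts H = \<Union>(edges H)"

end

theory Submission
  imports Defs
begin

inductive incone :: "(('x \<Rightarrow> real) \<times> real) set \<Rightarrow> ('x \<Rightarrow> real) \<Rightarrow> real \<Rightarrow> bool" for C where
  ic0: "incone C (\<lambda>_. 0) 0"
| icS: "incone C a b \<Longrightarrow> (c, d) \<in> C \<Longrightarrow> t \<ge> 0 \<Longrightarrow> incone C (\<lambda>x. a x + t * c x) (b + t * d)"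

lemma incone_gen: "(c, d) \<in> C \<Longrightarrow> incone C c d"
  using icS[OF ic0, of c d C 1] by simp

lemma incone_step2:
  assumes "incone C a b" "(c, d) \<in> C" "(c', d') \<in> C" "s \<ge> 0" "s' \<ge> 0"
  shows "incone C (\<lambda>x. a x + (s * c x + s' * c' x)) (b + (s * d + s' * d'))"
  using icS[OF icS[OF assms(1,2,4)] assms(3,5)] by (simp add: add.assoc)

lemma farkas:
  fixes X :: "'x set" and C :: "(('x \<Rightarrow> real) \<times> real) set"
  assumes "finite X" "finite C"
    and "\<And>a b. incone C a b \<Longrightarrow> (\<forall>x\<in>X. a x = 0) \<Longrightarrow> b \<ge> 0"
  shows "\<exists>z. \<forall>(a, b)\<in>C. (\<Sum>x\<in>X. a x * z x) \<le> b"
  using assms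
proof (induction X arbitrary: C rule: finite_induct)
  case empty
  then show ?case using incone_gen by fastforce
next
  case (insert x0 X C)
  define P where "P = {c\<in>C. fst c x0 > 0}"
  define N where "N = {c\<in>C. fst c x0 < 0}"
  define Z where "Z = {c\<in>C. fst c x0 = 0}"
  define comb where "comb = (\<lambda>(p :: ('x \<Rightarrow> real) \<times> real, n :: ('x \<Rightarrow> real) \<times> real).
     ((\<lambda>x. (- fst n x0) * fst p x + fst p x0 * fst n x), (- fst n x0) * snd p + fst p x0 * snd n))"
  define C' where "C' = Z \<union> comb ` (P \<times> N)"
  have fC: "finite P" "finite N" "finite Z" using insert.prems(1) by (auto simp: P_def N_def Z_def)
  have fC': "finite C'" using fC by (simp add: C'_def)
  have tr: "incone C a b \<and> a x0 = 0" if "incone C' a b" for a b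
    using that
  proof (induction rule: incone.induct)
    case ic0
    then show ?case by (simp add: incone.ic0)
  next
    case (icS a b c d t)
    show ?case
    proof (cases "(c, d) \<in> Z")
      case True
      then have "(c, d) \<in> C" "c x0 = 0" by (auto simp: Z_def)
      then show ?thesis using icS incone.icS by fastforce
    next
      case False
      then obtain p n where pn: "p \<in> P" "n \<in> N" "(c, d) = comb (p, n)"
        using icS.hyps(2) by (auto simp: C'_def)
      have pC: "(fst p, snd p) \<in> C" and nC: "(fst n, snd n) \<in> C" and s: "fst p x0 > 0" "fst n x0 < 0"
        using pn by (auto simp: P_def N_def)
      have c: "c = (\<lambda>x. (- fst n x0) * fst p x + fst p x0 * fst n x)"
        and d: "d = (- fst n x0) * snd p + fst p x0 * snd n" using pn(3) by (auto simp: comb_def)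
      have "incone C (\<lambda>x. a x + ((t * - fst n x0) * fst p x + (t * fst p x0) * fst n x))
          (b + ((t * - fst n x0) * snd p + (t * fst p x0) * snd n))"
        using incone_step2[OF conjunct1[OF icS.IH] pC nC, of "t * - fst n x0" "t * fst p x0"] s icS.hyps(3) by (simp add: mult_nonneg_nonpos)
      moreover have "(\<lambda>x. a x + ((t * - fst n x0) * fst p x + (t * fst p x0) * fst n x)) = (\<lambda>x. a x + t * c x)"
        by (auto simp: c algebra_simps)
      moreover have "(b + ((t * - fst n x0) * snd p + (t * fst p x0) * snd n)) = b + t * d"
        by (auto simp: d algebra_simps)
      moreover have "c x0 = 0" by (simp add: c)
      ultimately show ?thesis using icS.IH by simp
    qed
  qed
  have hyp': "b \<ge> 0" if "incone C' a b" "\<forall>x\<in>X. a x = 0" for a b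
    using tr[OF that(1)] that(2) insert.prems(2) by auto
  obtain z' where z': "\<forall>(a, b)\<in>C'. (\<Sum>x\<in>X. a x * z' x) \<le> b"
  proof -
    have "\<exists>z. \<forall>(a, b)\<in>C'. (\<Sum>x\<in>X. a x * z x) \<le> b"
      by (rule insert.IH[of C']) (use fC' hyp' in auto)
    then show ?thesis using that by blast
  qed
  define r where "r = (\<lambda>c. snd c - (\<Sum>x\<in>X. fst c x * z' x))"
  have rZ: "r c \<ge> 0" if "c \<in> Z" for c
    using z' that by (auto simp: C'_def r_def)
  have rPN: "r n / fst n x0 \<le> r p / fst p x0" if "p \<in> P" "n \<in> N" for p n
  proof -
    have s: "fst p x0 > 0" "fst n x0 < 0" using that by (auto simp: P_def N_def)
    have "comb (p, n) \<in> C'" using that by (auto simp: C'_def)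
    then have "(\<Sum>x\<in>X. ((- fst n x0) * fst p x + fst p x0 * fst n x) * z' x)
       \<le> (- fst n x0) * snd p + fst p x0 * snd n"
      using z' by (auto simp: comb_def)
    also have "(\<Sum>x\<in>X. ((- fst n x0) * fst p x + fst p x0 * fst n x) * z' x)
      = (- fst n x0) * (\<Sum>x\<in>X. fst p x * z' x) + fst p x0 * (\<Sum>x\<in>X. fst n x * z' x)"
    proof -
      have "(\<Sum>x\<in>X. ((- fst n x0) * fst p x + fst p x0 * fst n x) * z' x)
        = (\<Sum>x\<in>X. (- fst n x0) * (fst p x * z' x) + fst p x0 * (fst n x * z' x))"
        by (rule sum.cong) (auto simp: algebra_simps)
      also have "\<dots> = (- fst n x0) * (\<Sum>x\<in>X. fst p x * z' x) + fst p x0 * (\<Sum>x\<in>X. fst n x * z' x)"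
        by (simp only: sum.distrib sum_distrib_left)
      finally show ?thesis .
    qed
    finally have "0 \<le> (- fst n x0) * r p + fst p x0 * r n"
      by (simp add: r_def algebra_simps)
    then show ?thesis using s by (simp add: divide_simps) (simp add: algebra_simps)
  qed
  define t where "t = (if N = {} then (if P = {} then 0 else Min ((\<lambda>p. r p / fst p x0) ` P))
      else Max ((\<lambda>n. r n / fst n x0) ` N))"
  have tN: "r n / fst n x0 \<le> t" if "n \<in> N" for n
    using that fC by (auto simp: t_def)
  have tP: "t \<le> r p / fst p x0" if "p \<in> P" for p
  proof (cases "N = {}")
    case True
    then show ?thesis using that fC by (auto simp: t_def)
  next
    case False
    then show ?thesis using that fC rPN by (auto simp: t_def Max_le_iff)
  qed
  show ?case
  proof (intro exI[of _ "z'(x0 := t)"] ballI, clarify)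
    fix a b assume ab: "(a, b) \<in> C"
    have "(\<Sum>x\<in>insert x0 X. a x * (z'(x0 := t)) x) = a x0 * t + (\<Sum>x\<in>X. a x * z' x)"
      using insert.hyps by (simp add: sum.insert) (intro sum.cong, auto)
    moreover have "a x0 * t \<le> r (a, b)"
    proof -
      consider "a x0 = 0" | "a x0 > 0" | "a x0 < 0" by linarith
      then show ?thesis
      proof cases
        case 1 then show ?thesis using rZ[of "(a,b)"] ab by (simp add: Z_def)
      next
        case 2 then have "t \<le> r (a, b) / a x0" using tP[of "(a,b)"] ab by (simp add: P_def)
        then show ?thesis using 2 by (simp add: divide_simps mult.commute)
      next
        case 3 then have "r (a, b) / a x0 \<le> t" using tN[of "(a,b)"] ab by (simp add: N_def)
        then show ?thesis using 3 by (simp add: divide_simps mult.commute)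
      qed
    qed
    ultimately show "(\<Sum>x\<in>insert x0 X. a x * (z'(x0 := t)) x) \<le> b" by (simp add: r_def)
  qed
qed

lemma incone_decomp:
  assumes "incone (A ` I) a b" "finite I"
  shows "\<exists>l. (\<forall>i\<in>I. l i \<ge> 0) \<and> (\<forall>x. a x = (\<Sum>i\<in>I. l i * fst (A i) x)) \<and> b = (\<Sum>i\<in>I. l i * snd (A i))"
  using assms(1)
proof (induction rule: incone.induct)
  case ic0
  show ?case by (intro exI[of _ "\<lambda>_. 0"]) simp
next
  case (icS a b c d t)
  obtain l where l: "\<forall>i\<in>I. l i \<ge> 0" "\<forall>x. a x = (\<Sum>i\<in>I. l i * fst (A i) x)" "b = (\<Sum>i\<in>I. l i * snd (A i))"
    using icS.IH by blast
  obtain i0 where i0: "i0 \<in> I" "A i0 = (c, d)" using icS.hyps(2) by auto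
  define l' where "l' = (\<lambda>i. l i + (if i = i0 then t else 0))"
  have gen: "(\<Sum>i\<in>I. l' i * f i) = (\<Sum>i\<in>I. l i * f i) + t * f i0" for f :: "_ \<Rightarrow> real"
  proof -
    have "(\<Sum>i\<in>I. l' i * f i) = (\<Sum>i\<in>I. l i * f i + (if i = i0 then t * f i else 0))"
      by (rule sum.cong) (auto simp: l'_def algebra_simps)
    also have "\<dots> = (\<Sum>i\<in>I. l i * f i) + t * f i0"
      using assms(2) i0(1) by (simp add: sum.distrib)
    finally show ?thesis .
  qed
  show ?case
  proof (intro exI[of _ l'] conjI allI ballI)
    show "0 \<le> l' i" if "i \<in> I" for i using l(1) that icS.hyps(3) by (simp add: l'_def)
    show "a x + t * c x = (\<Sum>i\<in>I. l' i * fst (A i) x)" for x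
      using gen[of "\<lambda>i. fst (A i) x"] l(2) i0(2) by simp
    show "b + t * d = (\<Sum>i\<in>I. l' i * snd (A i))"
      using gen[of "\<lambda>i. snd (A i)"] l(3) i0(2) by simp
  qed
qed


lemma fiber_sum:
  fixes w :: "'e \<Rightarrow> real"
  assumes "finite E" "finite F"
  shows "(\<Sum>f\<in>F. \<Sum>e\<in>{e\<in>E. g e = f}. w e) = (\<Sum>e\<in>{e\<in>E. g e \<in> F}. w e)"
proof -
  have "(\<Sum>f\<in>F. \<Sum>e\<in>{e\<in>E. g e = f}. w e) = (\<Sum>f\<in>F. \<Sum>e\<in>E. if g e = f then w e else 0)"
    using assms by (simp add: sum.inter_filter)
  also have "\<dots> = (\<Sum>e\<in>E. \<Sum>f\<in>F. if g e = f then w e else 0)" by (rule sum.swap)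
  also have "\<dots> = (\<Sum>e\<in>E. if g e \<in> F then w e else 0)"
    using assms by (simp add: sum.delta)
  also have "\<dots> = (\<Sum>e\<in>{e\<in>E. g e \<in> F}. w e)"
    using assms by (simp add: sum.inter_filter)
  finally show ?thesis .
qed



lemma sum_restrict_sub:
  fixes f :: "'e \<Rightarrow> real"
  assumes "A \<subseteq> B" "finite B"
  shows "(\<Sum>x\<in>B. if x \<in> A then f x else 0) = (\<Sum>x\<in>A. f x)"
proof -
  have "(\<Sum>x\<in>B. if x \<in> A then f x else 0) = (\<Sum>x\<in>B \<inter> A. f x)"
    using assms by (simp add: sum.inter_restrict)
  also have "B \<inter> A = A" using assms by auto
  finally show ?thesis .
qed



lemma packing_bound:
  assumes "finite (edges G)" "\<forall>e\<in>edges G. e \<noteq> {} \<and> e \<subseteq> verts G" "frac_packing G u"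
  shows "(\<Sum>e\<in>edges G. u e) \<le> real (card (edges G))"
proof -
  have "u e \<le> 1" if "e \<in> edges G" for e
  proof -
    have ne: "e \<noteq> {}" and sub: "e \<subseteq> verts G" using assms(2) that by simp_all
    obtain v where v: "v \<in> e" using ne by auto
    then have vV: "v \<in> verts G" using sub by auto
    have nn: "\<forall>e\<in>edges G. u e \<ge> 0" using assms(3) unfolding frac_packing_def by blast
    have "u e \<le> (\<Sum>e'\<in>{e'\<in>edges G. v \<in> e'}. u e')"
    proof (rule member_le_sum)
      show "e \<in> {e' \<in> edges G. v \<in> e'}" using that v by blast
      show "finite {e' \<in> edges G. v \<in> e'}" using assms(1) by simp
      show "\<And>x. x \<in> {e' \<in> edges G. v \<in> e'} - {e} \<Longrightarrow> 0 \<le> u x" using nn by blast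
    qed
    also have "\<dots> \<le> 1" using assms(3) vV unfolding frac_packing_def by blast
    finally show ?thesis .
  qed
  then show ?thesis using sum_bounded_above[of "edges G" u 1] by simp
qed



lemma tau_upper:
  assumes "finite (edges G)" "\<forall>e\<in>edges G. e \<noteq> {} \<and> e \<subseteq> verts G" "frac_packing G u"
  shows "(\<Sum>e\<in>edges G. u e) \<le> tau_star G"
  unfolding tau_star_def
proof (rule cSup_upper)
  show "(\<Sum>e\<in>edges G. u e) \<in> {\<Sum>e\<in>edges G. u e |u. frac_packing G u}" using assms(3) by blast
  show "bdd_above {\<Sum>e\<in>edges G. u e |u. frac_packing G u}"
    using packing_bound[OF assms(1,2)] by (auto intro!: bdd_aboveI)
qed



lemma rho_lower:
  assumes "frac_edge_cover G u"
  shows "rho_star G \<le> (\<Sum>e\<in>edges G. u e)"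
  unfolding rho_star_def
proof (rule cInf_lower)
  show "(\<Sum>e\<in>edges G. u e) \<in> {\<Sum>e\<in>edges G. u e |u. frac_edge_cover G u}" using assms by blast
  show "bdd_below {\<Sum>e\<in>edges G. u e |u. frac_edge_cover G u}"
    by (rule bdd_belowI[of _ 0]) (auto simp: frac_edge_cover_def intro: sum_nonneg)
qed

datatype 'a ci = CV 'a | PE "'a set" | OB | NW "'a set" | NY 'a

fun cA :: "'a ci \<Rightarrow> (('a set + 'a) \<Rightarrow> real) \<times> real" where
  "cA (CV v) = ((\<lambda>x. case x of Inl e \<Rightarrow> (if v \<in> e then -1 else 0) | Inr _ \<Rightarrow> 0), -1)"
| "cA (PE e) = ((\<lambda>x. case x of Inl _ \<Rightarrow> 0 | Inr v \<Rightarrow> (if v \<in> e then 1 else 0)), 1)"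
| "cA OB = ((\<lambda>x. case x of Inl _ \<Rightarrow> 1 | Inr _ \<Rightarrow> -1), 0)"
| "cA (NW e) = ((\<lambda>x. if x = Inl e then -1 else 0), 0)"
| "cA (NY v) = ((\<lambda>x. if x = Inr v then -1 else 0), 0)"

lemma sumI:
  fixes f :: "'a ci \<Rightarrow> real"
  assumes "finite V" "finite E"
  shows "(\<Sum>i\<in>CV`V \<union> PE`E \<union> {OB} \<union> NW`E \<union> NY`V. f i) =
    (\<Sum>v\<in>V. f (CV v)) + (\<Sum>e\<in>E. f (PE e)) + f OB + (\<Sum>e\<in>E. f (NW e)) + (\<Sum>v\<in>V. f (NY v))"
proof -
  have fi: "finite (CV`V)" "finite (PE`E)" "finite (NW`E)" "finite (NY`V)" using assms by auto
  have "(\<Sum>i\<in>CV`V \<union> PE`E \<union> {OB} \<union> NW`E \<union> NY`V. f i) =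
     (\<Sum>i\<in>CV`V \<union> PE`E \<union> {OB} \<union> NW`E. f i) + (\<Sum>i\<in>NY`V. f i)"
    by (rule sum.union_disjoint) (use fi in auto)
  also have "(\<Sum>i\<in>CV`V \<union> PE`E \<union> {OB} \<union> NW`E. f i) =
     (\<Sum>i\<in>CV`V \<union> PE`E \<union> {OB}. f i) + (\<Sum>i\<in>NW`E. f i)"
    by (rule sum.union_disjoint) (use fi in auto)
  also have "(\<Sum>i\<in>CV`V \<union> PE`E \<union> {OB}. f i) =
     (\<Sum>i\<in>CV`V \<union> PE`E. f i) + (\<Sum>i\<in>{OB}. f i)"
    by (rule sum.union_disjoint) (use fi in auto)
  also have "(\<Sum>i\<in>CV`V \<union> PE`E. f i) = (\<Sum>i\<in>CV`V. f i) + (\<Sum>i\<in>PE`E. f i)"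
    by (rule sum.union_disjoint) (use fi in auto)
  finally show ?thesis by (simp add: sum.reindex inj_on_def)
qed

lemma sumX:
  fixes f :: "('a set + 'a) \<Rightarrow> real"
  assumes "finite V" "finite E"
  shows "(\<Sum>x\<in>Inl`E \<union> Inr`V. f x) = (\<Sum>e\<in>E. f (Inl e)) + (\<Sum>v\<in>V. f (Inr v))"
  using assms by (subst sum.union_disjoint) (auto simp: sum.reindex inj_on_def)


lemma sum_delta_m1:
  fixes f :: "'b \<Rightarrow> real"
  assumes "finite A" "a \<in> A"
  shows "(\<Sum>x\<in>A. f x * (if a = x then -1 else 0)) = - f a"
proof -
  have "(\<Sum>x\<in>A. f x * (if a = x then -1 else 0)) = (\<Sum>x\<in>A. if a = x then - f x else 0)"
    by (rule sum.cong) auto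
  also have "\<dots> = - f a" using assms by (simp add: sum.delta)
  finally show ?thesis .
qed

lemma sum_delta_m1':
  fixes f :: "'b \<Rightarrow> real"
  assumes "finite A" "a \<in> A"
  shows "(\<Sum>x\<in>A. (if x = a then -1 else 0) * f x) = - f a"
proof -
  have "(\<Sum>x\<in>A. (if x = a then -1 else 0) * f x) = (\<Sum>x\<in>A. if a = x then - f x else 0)"
    by (rule sum.cong) auto
  also have "\<dots> = - f a" using assms by (simp add: sum.delta)
  finally show ?thesis .
qed

lemma dual_core:
  fixes V :: "'a set" and E :: "'a set set" and lam :: "'a \<Rightarrow> real" and mu :: "'a set \<Rightarrow> real"
  assumes fV: "finite V" and fE: "finite E" and cov: "\<forall>v\<in>V. \<exists>e\<in>E. v \<in> e"
    and lam0: "\<forall>v\<in>V. lam v \<ge> 0" and mu0: "\<forall>e\<in>E. mu e \<ge> 0" and g0: "g \<ge> 0"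
    and e1: "\<And>e. e \<in> E \<Longrightarrow> (\<Sum>v\<in>V. if v \<in> e then lam v else 0) \<le> g"
    and e2: "\<And>v. v \<in> V \<Longrightarrow> (\<Sum>e\<in>E. if v \<in> e then mu e else 0) \<ge> g"
  shows "(\<Sum>v\<in>V. lam v) \<le> (\<Sum>e\<in>E. mu e)"
proof (cases "g = 0")
  case True
  have "lam v = 0" if vV: "v \<in> V" for v
  proof -
    obtain e where e: "e \<in> E" "v \<in> e" using cov vV by blast
    have "lam v = (if v \<in> e then lam v else 0)" using e by simp
    also have "\<dots> \<le> (\<Sum>v\<in>V. if v \<in> e then lam v else 0)"
      by (rule member_le_sum) (use that fV lam0 in auto)
    also have "\<dots> \<le> 0" using e1[OF e(1)] True by simp
    finally have "lam v \<le> 0" .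
    then show ?thesis using lam0 that by (meson antisym)
  qed
  then have "(\<Sum>v\<in>V. lam v) = 0" by simp
  moreover have "(\<Sum>e\<in>E. mu e) \<ge> 0" using mu0 by (simp add: sum_nonneg)
  ultimately show ?thesis by simp
next
  case False
  then have gp: "g > 0" using g0 by simp
  have "g * (\<Sum>e\<in>E. mu e) = (\<Sum>e\<in>E. mu e * g)" by (simp add: sum_distrib_left mult.commute)
  also have "\<dots> \<ge> (\<Sum>e\<in>E. mu e * (\<Sum>v\<in>V. if v \<in> e then lam v else 0))"
  proof (rule sum_mono)
    fix e assume "e \<in> E"
    then show "mu e * (\<Sum>v\<in>V. if v \<in> e then lam v else 0) \<le> mu e * g"
      using e1 mu0 by (simp add: mult_left_mono)
  qed
  finally have 1: "g * (\<Sum>e\<in>E. mu e) \<ge> (\<Sum>e\<in>E. mu e * (\<Sum>v\<in>V. if v \<in> e then lam v else 0))" .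
  have "(\<Sum>e\<in>E. mu e * (\<Sum>v\<in>V. if v \<in> e then lam v else 0))
      = (\<Sum>e\<in>E. \<Sum>v\<in>V. if v \<in> e then mu e * lam v else 0)"
    unfolding sum_distrib_left by (rule sum.cong, simp, rule sum.cong, simp_all)
  also have "\<dots> = (\<Sum>v\<in>V. \<Sum>e\<in>E. if v \<in> e then mu e * lam v else 0)" by (rule sum.swap)
  also have "\<dots> = (\<Sum>v\<in>V. lam v * (\<Sum>e\<in>E. if v \<in> e then mu e else 0))"
    unfolding sum_distrib_left by (rule sum.cong, simp, rule sum.cong, simp_all)
  also have "\<dots> \<ge> (\<Sum>v\<in>V. lam v * g)"
  proof (rule sum_mono)
    fix v assume "v \<in> V"
    then show "lam v * g \<le> lam v * (\<Sum>e\<in>E. if v \<in> e then mu e else 0)"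
      using e2 lam0 by (simp add: mult_left_mono)
  qed
  finally have "g * (\<Sum>v\<in>V. lam v) \<le> g * (\<Sum>e\<in>E. mu e)"
    using 1 by (simp add: sum_distrib_left sum_distrib_right mult.commute)
  then show ?thesis using gp by simp
qed

lemma dual_exists:
  fixes V :: "'a set" and E :: "'a set set"
  assumes fV: "finite V" and fE: "finite E" and cov: "\<forall>v\<in>V. \<exists>e\<in>E. v \<in> e"
  shows "\<exists>(w :: 'a set \<Rightarrow> real) (y :: 'a \<Rightarrow> real). (\<forall>e\<in>E. w e \<ge> 0) \<and> (\<forall>v\<in>V. y v \<ge> 0) \<and>
     (\<forall>v\<in>V. (\<Sum>e\<in>E. if v \<in> e then w e else 0) \<ge> 1) \<and>
     (\<forall>e\<in>E. (\<Sum>v\<in>V. if v \<in> e then y v else 0) \<le> 1) \<and>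
     (\<Sum>e\<in>E. w e) \<le> (\<Sum>v\<in>V. y v)"
proof -
  define I where "I = CV`V \<union> PE`E \<union> {OB} \<union> NW`E \<union> NY`V"
  define X where "X = Inl`E \<union> Inr`V"
  have fI: "finite I" using fV fE by (simp add: I_def)
  have fX: "finite X" using fV fE by (simp add: X_def)
  have hyp: "b \<ge> 0" if ic: "incone (cA ` I) a b" and a0: "\<forall>x\<in>X. a x = 0" for a b
  proof -
    obtain l where l0: "\<forall>i\<in>I. l i \<ge> 0" and la: "\<forall>x. a x = (\<Sum>i\<in>I. l i * fst (cA i) x)"
      and lb: "b = (\<Sum>i\<in>I. l i * snd (cA i))"
      using incone_decomp[OF ic fI] by blast
    define lam where "lam = (\<lambda>v. l (CV v))"
    define mu where "mu = (\<lambda>e. l (PE e))"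
    define g where "g = l OB"
    have lam0: "\<forall>v\<in>V. lam v \<ge> 0" using l0 by (auto simp: lam_def I_def)
    have mu0: "\<forall>e\<in>E. mu e \<ge> 0" using l0 by (auto simp: mu_def I_def)
    have g0: "g \<ge> 0" using l0 by (auto simp: g_def I_def)
    have aL: "a (Inl e) = g - (\<Sum>v\<in>V. if v \<in> e then lam v else 0) - l (NW e)" if "e \<in> E" for e
    proof -
      have "a (Inl e) = (\<Sum>v\<in>V. l (CV v) * (if v \<in> e then -1 else 0)) + l OB
          + (\<Sum>e'\<in>E. l (NW e') * (if e = e' then -1 else 0))"
        using la sumI[OF fV fE, of "\<lambda>i. l i * fst (cA i) (Inl e)"] by (simp add: I_def)
      also have "(\<Sum>e'\<in>E. l (NW e') * (if e = e' then -1 else 0)) = - l (NW e)"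
        using sum_delta_m1[OF fE that] by simp
      also have "(\<Sum>v\<in>V. l (CV v) * (if v \<in> e then -1 else 0)) = - (\<Sum>v\<in>V. if v \<in> e then lam v else 0)"
        by (subst sum_negf[symmetric], rule sum.cong, auto simp: lam_def)
      finally show ?thesis by (simp add: g_def)
    qed
    have aR: "a (Inr v) = (\<Sum>e\<in>E. if v \<in> e then mu e else 0) - g - l (NY v)" if "v \<in> V" for v
    proof -
      have "a (Inr v) = (\<Sum>e\<in>E. l (PE e) * (if v \<in> e then 1 else 0)) - l OB
          + (\<Sum>v'\<in>V. l (NY v') * (if v = v' then -1 else 0))"
        using la sumI[OF fV fE, of "\<lambda>i. l i * fst (cA i) (Inr v)"] by (simp add: I_def)
      also have "(\<Sum>v'\<in>V. l (NY v') * (if v = v' then -1 else 0)) = - l (NY v)"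
        using sum_delta_m1[OF fV that] by simp
      also have "(\<Sum>e\<in>E. l (PE e) * (if v \<in> e then 1 else 0)) = (\<Sum>e\<in>E. if v \<in> e then mu e else 0)"
        by (rule sum.cong) (auto simp: mu_def)
      finally show ?thesis by (simp add: g_def)
    qed
    have bv: "b = (\<Sum>e\<in>E. mu e) - (\<Sum>v\<in>V. lam v)"
      using lb sumI[OF fV fE, of "\<lambda>i. l i * snd (cA i)"] by (simp add: I_def lam_def mu_def sum_negf)
    have e1: "(\<Sum>v\<in>V. if v \<in> e then lam v else 0) \<le> g" if "e \<in> E" for e
    proof -
      have "a (Inl e) = 0" using a0 that by (simp add: X_def)
      moreover have "l (NW e) \<ge> 0" using l0 that by (simp add: I_def)
      ultimately show ?thesis using aL[OF that] by linarith
    qed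
    have e2: "(\<Sum>e\<in>E. if v \<in> e then mu e else 0) \<ge> g" if "v \<in> V" for v
    proof -
      have "a (Inr v) = 0" using a0 that by (simp add: X_def)
      moreover have "l (NY v) \<ge> 0" using l0 that by (simp add: I_def)
      ultimately show ?thesis using aR[OF that] by linarith
    qed
    have "(\<Sum>v\<in>V. lam v) \<le> (\<Sum>e\<in>E. mu e)"
      by (rule dual_core[OF fV fE cov lam0 mu0 g0 e1 e2])
    then show ?thesis using bv by simp
  qed
  obtain z where z: "\<forall>(a, b)\<in>cA ` I. (\<Sum>x\<in>X. a x * z x) \<le> b"
  proof -
    have "\<exists>z. \<forall>(a, b)\<in>cA ` I. (\<Sum>x\<in>X. a x * z x) \<le> b"
      by (rule farkas) (use fX fI hyp in auto)
    then show ?thesis using that by blast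
  qed
  have zi: "(\<Sum>e\<in>E. fst (cA i) (Inl e) * z (Inl e)) + (\<Sum>v\<in>V. fst (cA i) (Inr v) * z (Inr v)) \<le> snd (cA i)"
    if "i \<in> I" for i
  proof -
    have "cA i \<in> cA ` I" using that by simp
    then have "case cA i of (a, b) \<Rightarrow> (\<Sum>x\<in>X. a x * z x) \<le> b" by (rule bspec[OF z])
    then have "(\<Sum>x\<in>X. fst (cA i) x * z x) \<le> snd (cA i)" by (simp add: case_prod_beta)
    then show ?thesis using sumX[OF fV fE, of "\<lambda>x. fst (cA i) x * z x"] unfolding X_def by simp
  qed
  define w where "w = (\<lambda>e. z (Inl e))"
  define y where "y = (\<lambda>v. z (Inr v))"
  have h1: "w e \<ge> 0" if "e \<in> E" for e
    using zi[of "NW e"] that sum_delta_m1'[OF fE that, of "\<lambda>e. z (Inl e)"] by (simp add: I_def w_def)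
  have h2: "y v \<ge> 0" if "v \<in> V" for v
    using zi[of "NY v"] that sum_delta_m1'[OF fV that, of "\<lambda>v. z (Inr v)"] by (simp add: I_def y_def)
  have h3: "(\<Sum>e\<in>E. if v \<in> e then w e else 0) \<ge> 1" if "v \<in> V" for v
  proof -
    have eq: "(\<Sum>e\<in>E. fst (cA (CV v)) (Inl e) * z (Inl e)) = - (\<Sum>e\<in>E. if v \<in> e then w e else 0)"
      by (subst sum_negf[symmetric], rule sum.cong) (auto simp: w_def)
    have "CV v \<in> I" using that by (simp add: I_def)
    from zi[OF this] eq show ?thesis by simp
  qed
  have h4: "(\<Sum>v\<in>V. if v \<in> e then y v else 0) \<le> 1" if "e \<in> E" for e
  proof -
    have eq: "(\<Sum>v\<in>V. fst (cA (PE e)) (Inr v) * z (Inr v)) = (\<Sum>v\<in>V. if v \<in> e then y v else 0)"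
      by (rule sum.cong) (auto simp: y_def)
    have "PE e \<in> I" using that by (simp add: I_def)
    from zi[OF this] eq show ?thesis by simp
  qed
  have h5: "(\<Sum>e\<in>E. w e) \<le> (\<Sum>v\<in>V. y v)"
    using zi[of OB] by (simp add: I_def y_def w_def sum_negf)
  show ?thesis
  proof (rule exI[where x=w], rule exI[where x=y], intro conjI)
    show "\<forall>e\<in>E. 0 \<le> w e" using h1 by blast
    show "\<forall>v\<in>V. 0 \<le> y v" using h2 by blast
    show "\<forall>v\<in>V. 1 \<le> (\<Sum>e\<in>E. if v \<in> e then w e else 0)" using h3 by blast
    show "\<forall>e\<in>E. (\<Sum>v\<in>V. if v \<in> e then y v else 0) \<le> 1" using h4 by blast
    show "sum w E \<le> sum y V" using h5 by simp
  qed
qed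

lemma verts_induced[simp]: "verts (induced H S) = S" by (simp add: induced_def verts_def)
lemma edges_induced[simp]: "edges (induced H S) = {S \<inter> e |e. e \<in> edges H \<and> S \<inter> e \<noteq> {}}"
  by (simp add: induced_def edges_def)
lemma verts_red[simp]: "verts (red G) = verts G" by (simp add: red_def verts_def)
lemma edges_red[simp]: "edges (red G) = {e \<in> edges G. \<not> (\<exists>e'\<in>edges G. e' \<noteq> e \<and> e \<subseteq> e')}"
  by (simp add: red_def edges_def)

lemma induced_props:
  assumes "finite (edges H)"
  shows "finite (edges (induced H S)) \<and> (\<forall>f\<in>edges (induced H S). f \<noteq> {} \<and> f \<subseteq> verts (induced H S))"
proof -
  have "edges (induced H S) \<subseteq> (\<lambda>e. S \<inter> e) ` edges H" by auto
  then have "finite (edges (induced H S))" using assms finite_surj by blast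
  moreover have "\<forall>f\<in>edges (induced H S). f \<noteq> {} \<and> f \<subseteq> verts (induced H S)" by auto
  ultimately show ?thesis by blast
qed

lemma red_props:
  assumes "finite (edges G)" "\<forall>f\<in>edges G. f \<noteq> {} \<and> f \<subseteq> verts G"
  shows "finite (edges (red G)) \<and> (\<forall>f\<in>edges (red G). f \<noteq> {} \<and> f \<subseteq> verts (red G))"
proof -
  have "edges (red G) \<subseteq> edges G" by auto
  then show ?thesis using assms finite_subset by auto
qed

lemma tau_red_le:
  assumes fG: "finite (edges G)" and pG: "\<forall>f\<in>edges G. f \<noteq> {} \<and> f \<subseteq> verts G"
  shows "tau_star (red G) \<le> tau_star G"
  unfolding tau_star_def
proof (rule cSup_mono)
  show "{\<Sum>e\<in>edges (red G). u e |u. frac_packing (red G) u} \<noteq> {}"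
  proof -
    have "frac_packing (red G) (\<lambda>_. 0)" by (simp add: frac_packing_def)
    then show ?thesis by blast
  qed
  show "bdd_above {\<Sum>e\<in>edges G. u e |u. frac_packing G u}"
    using packing_bound[OF fG pG] by (auto intro!: bdd_aboveI)
  fix b assume "b \<in> {\<Sum>e\<in>edges (red G). u e |u. frac_packing (red G) u}"
  then obtain u where b: "b = (\<Sum>e\<in>edges (red G). u e)" and u: "frac_packing (red G) u" by blast
  define ER where "ER = edges (red G)"
  have sub: "ER \<subseteq> edges G" by (auto simp: ER_def)
  define u' where "u' = (\<lambda>e. if e \<in> ER then u e else 0)"
  have "frac_packing G u'"
    unfolding frac_packing_def
  proof (intro conjI ballI)
    show "0 \<le> u' e" if "e \<in> edges G" for e
      using u unfolding u'_def frac_packing_def ER_def by auto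
    fix v assume v: "v \<in> verts G"
    have "(\<Sum>e\<in>{e \<in> edges G. v \<in> e}. u' e) = (\<Sum>e\<in>{e \<in> ER. v \<in> e}. u e)"
      by (rule sum.mono_neutral_cong_right) (use fG sub in \<open>auto simp: u'_def\<close>)
    also have "\<dots> \<le> 1" using u v unfolding frac_packing_def ER_def by auto
    finally show "(\<Sum>e\<in>{e \<in> edges G. v \<in> e}. u' e) \<le> 1" .
  qed
  moreover have "(\<Sum>e\<in>edges G. u' e) = b"
    unfolding b ER_def[symmetric]
    by (rule sum.mono_neutral_cong_right) (use fG sub in \<open>auto simp: u'_def\<close>)
  ultimately show "\<exists>a\<in>{\<Sum>e\<in>edges G. u e |u. frac_packing G u}. b \<le> a" by auto
qed

lemma max_superset:
  assumes fE: "finite E" and fe: "\<forall>e\<in>E. finite e" and e: "e \<in> E"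
  shows "\<exists>m\<in>E. e \<subseteq> m \<and> (\<forall>e'\<in>E. m \<subseteq> e' \<longrightarrow> e' = m)"
proof -
  define T where "T = {e'\<in>E. e \<subseteq> e'}"
  have fT: "finite T" and neT: "T \<noteq> {}" using fE e by (auto simp: T_def)
  have "Max (card ` T) \<in> card ` T" using fT neT by simp
  then obtain m where m: "m \<in> T" "card m = Max (card ` T)" by auto
  show ?thesis
  proof (intro bexI conjI ballI impI)
    show "m \<in> E" "e \<subseteq> m" using m by (auto simp: T_def)
    fix e' assume e': "e' \<in> E" "m \<subseteq> e'"
    then have "e' \<in> T" using m by (auto simp: T_def)
    then have "card e' \<le> card m" using m fT by simp
    moreover have "card m \<le> card e'" using card_mono fe e' by blast
    ultimately show "e' = m" using card_subset_eq[of e' m] fe e' by simp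
  qed
qed


lemma hg_basic:
  assumes "hypergraph H"
  shows "finite (verts H)" "finite (edges H)" "\<forall>e\<in>edges H. e \<noteq> {} \<and> e \<subseteq> verts H"
    "\<forall>e\<in>edges H. finite e" "\<forall>v\<in>verts H. \<exists>e\<in>edges H. v \<in> e"
proof -
  have fV: "finite (verts H)" and ne: "{} \<notin> edges H" and VU: "verts H = \<Union>(edges H)"
    using assms by (auto simp: hypergraph_def)
  have sub: "edges H \<subseteq> Pow (verts H)" using VU by auto
  show "finite (verts H)" by (rule fV)
  show "finite (edges H)" by (rule finite_subset[OF sub]) (simp add: fV)
  show "\<forall>e\<in>edges H. e \<noteq> {} \<and> e \<subseteq> verts H" using ne sub by auto
  show "\<forall>e\<in>edges H. finite e" using sub fV by (auto intro: finite_subset)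
  show "\<forall>v\<in>verts H. \<exists>e\<in>edges H. v \<in> e" using VU by auto
qed

lemma rho_red_eq:
  assumes hg: "hypergraph H"
  shows "rho_star (red H) = rho_star H"
proof -
  define V where "V = verts H"
  define E where "E = edges H"
  define ER where "ER = edges (red H)"
  have fV: "finite V" and fE: "finite E" and pE: "\<forall>e\<in>E. e \<noteq> {} \<and> e \<subseteq> V"
    and fe: "\<forall>e\<in>E. finite e" and cov: "\<forall>v\<in>V. \<exists>e\<in>E. v \<in> e"
    using hg_basic[OF hg] by (simp_all add: V_def E_def)
  have ERsub: "ER \<subseteq> E" by (auto simp: ER_def E_def)
  have ms: "\<exists>m\<in>ER. e \<subseteq> m" if eE: "e \<in> E" for e
  proof -
    obtain m where m: "m \<in> E" "e \<subseteq> m" "\<forall>e'\<in>E. m \<subseteq> e' \<longrightarrow> e' = m"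
      using max_superset[OF fE fe eE] by blast
    then have "m \<in> ER" by (auto simp: ER_def E_def)
    then show ?thesis using m by blast
  qed
  define mf where "mf = (\<lambda>e. SOME m. m \<in> ER \<and> e \<subseteq> m)"
  have mf: "\<forall>e\<in>E. mf e \<in> ER \<and> e \<subseteq> mf e"
  proof
    fix e assume "e \<in> E"
    then have "\<exists>m. m \<in> ER \<and> e \<subseteq> m" using ms by blast
    then show "mf e \<in> ER \<and> e \<subseteq> mf e" unfolding mf_def by (rule someI_ex)
  qed
  have fER: "finite ER" using ERsub fE finite_subset by blast
  have bddH: "bdd_below {\<Sum>e\<in>edges H. u e |u. frac_edge_cover H u}"
    by (rule bdd_belowI[of _ 0]) (auto simp: frac_edge_cover_def intro: sum_nonneg)
  have bddR: "bdd_below {\<Sum>e\<in>edges (red H). u e |u. frac_edge_cover (red H) u}"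
    by (rule bdd_belowI[of _ 0]) (auto simp: frac_edge_cover_def intro: sum_nonneg)
  have "rho_star H \<le> rho_star (red H)"
    unfolding rho_star_def
  proof (rule cInf_mono)
    show "bdd_below {\<Sum>e\<in>edges H. u e |u. frac_edge_cover H u}" by (rule bddH)
    have "frac_edge_cover (red H) (\<lambda>_. 1)"
      unfolding frac_edge_cover_def
    proof (intro conjI ballI)
      fix v assume "v \<in> verts (red H)"
      then have "v \<in> V" by (simp add: V_def)
      then obtain e where e: "e \<in> E" "v \<in> e" using cov by blast
      obtain m where m: "m \<in> ER" "e \<subseteq> m" using ms[OF e(1)] by blast
      have "(1::real) \<le> (\<Sum>e\<in>{e \<in> ER. v \<in> e}. 1)"
        using m e fER by (auto simp: Suc_le_eq card_gt_0_iff)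
      then show "1 \<le> (\<Sum>e\<in>{e \<in> edges (red H). v \<in> e}. (1::real))" by (simp add: ER_def)
    qed simp
    then show "{\<Sum>e\<in>edges (red H). u e |u. frac_edge_cover (red H) u} \<noteq> {}" by blast
    fix b assume "b \<in> {\<Sum>e\<in>edges (red H). u e |u. frac_edge_cover (red H) u}"
    then obtain u where b: "b = (\<Sum>e\<in>ER. u e)" and u: "frac_edge_cover (red H) u"
      by (auto simp: ER_def)
    define u' where "u' = (\<lambda>e. if e \<in> ER then u e else 0)"
    have "frac_edge_cover H u'"
      unfolding frac_edge_cover_def
    proof (intro conjI ballI)
      show "0 \<le> u' e" if "e \<in> edges H" for e
        using u unfolding u'_def frac_edge_cover_def ER_def by auto
      fix v assume v: "v \<in> verts H"
      have "(\<Sum>e\<in>{e \<in> edges H. v \<in> e}. u' e) = (\<Sum>e\<in>{e \<in> ER. v \<in> e}. u e)"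
        by (rule sum.mono_neutral_cong_right) (use fE ERsub in \<open>auto simp: u'_def E_def\<close>)
      moreover have "1 \<le> (\<Sum>e\<in>{e \<in> ER. v \<in> e}. u e)" using u v unfolding frac_edge_cover_def ER_def by auto
      ultimately show "1 \<le> (\<Sum>e\<in>{e \<in> edges H. v \<in> e}. u' e)" by simp
    qed
    moreover have "(\<Sum>e\<in>edges H. u' e) = b"
      unfolding b E_def[symmetric]
      by (rule sum.mono_neutral_cong_right) (use fE ERsub in \<open>auto simp: u'_def\<close>)
    ultimately show "\<exists>a\<in>{\<Sum>e\<in>edges H. u e |u. frac_edge_cover H u}. a \<le> b" by force
  qed
  moreover have "rho_star (red H) \<le> rho_star H"
    unfolding rho_star_def
  proof (rule cInf_mono)
    show "bdd_below {\<Sum>e\<in>edges (red H). u e |u. frac_edge_cover (red H) u}" by (rule bddR)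
    have "frac_edge_cover H (\<lambda>_. 1)"
      unfolding frac_edge_cover_def
    proof (intro conjI ballI)
      fix v assume "v \<in> verts H"
      then have "v \<in> V" by (simp add: V_def)
      then obtain e where e: "e \<in> E" "v \<in> e" using cov by blast
      have "(1::real) \<le> (\<Sum>e\<in>{e \<in> E. v \<in> e}. 1)"
        using e fE by (auto simp: Suc_le_eq card_gt_0_iff)
      then show "1 \<le> (\<Sum>e\<in>{e \<in> edges H. v \<in> e}. (1::real))" by (simp add: E_def)
    qed simp
    then show "{\<Sum>e\<in>edges H. u e |u. frac_edge_cover H u} \<noteq> {}" by blast
    fix b assume "b \<in> {\<Sum>e\<in>edges H. u e |u. frac_edge_cover H u}"
    then obtain u where b: "b = (\<Sum>e\<in>E. u e)" and u: "frac_edge_cover H u"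
      by (auto simp: E_def)
    have u0: "\<forall>e\<in>E. u e \<ge> 0" using u by (simp add: frac_edge_cover_def E_def)
    define u' where "u' = (\<lambda>f. \<Sum>e\<in>{e\<in>E. mf e = f}. u e)"
    have "frac_edge_cover (red H) u'"
      unfolding frac_edge_cover_def
    proof (intro conjI ballI)
      show "0 \<le> u' e" for e
        unfolding u'_def using u0 by (intro sum_nonneg) auto
      fix v assume v: "v \<in> verts (red H)"
      have "(\<Sum>f\<in>{f \<in> ER. v \<in> f}. u' f) = (\<Sum>e\<in>{e\<in>E. mf e \<in> {f \<in> ER. v \<in> f}}. u e)"
        unfolding u'_def by (rule fiber_sum) (use fE fER in auto)
      also have "\<dots> \<ge> (\<Sum>e\<in>{e\<in>E. v \<in> e}. u e)"
        by (rule sum_mono2) (use fE mf u0 in auto)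
      finally have "(\<Sum>f\<in>{f \<in> ER. v \<in> f}. u' f) \<ge> (\<Sum>e\<in>{e\<in>E. v \<in> e}. u e)" .
      moreover have "(\<Sum>e\<in>{e\<in>E. v \<in> e}. u e) \<ge> 1"
        using u v unfolding frac_edge_cover_def E_def by auto
      ultimately show "1 \<le> (\<Sum>f\<in>{f \<in> edges (red H). v \<in> f}. u' f)" by (simp add: ER_def)
    qed
    moreover have "(\<Sum>f\<in>edges (red H). u' f) = b"
    proof -
      have "(\<Sum>f\<in>ER. u' f) = (\<Sum>e\<in>{e\<in>E. mf e \<in> ER}. u e)"
        unfolding u'_def by (rule fiber_sum) (use fE fER in auto)
      also have "{e\<in>E. mf e \<in> ER} = E" using mf by auto
      finally show ?thesis by (simp add: b ER_def)
    qed
    ultimately show "\<exists>a\<in>{\<Sum>e\<in>edges (red H). u e |u. frac_edge_cover (red H) u}. a \<le> b" by force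
  qed
  ultimately show ?thesis by simp
qed

lemma kappa_ge:
  assumes hg: "hypergraph H" and S: "S \<subseteq> verts H"
  shows "tau_star (red (induced H S)) \<le> kappa H"
  unfolding kappa_def
proof (rule Max_ge)
  show "finite ((\<lambda>S. tau_star (red (induced H S))) ` Pow (verts H))"
    using hg_basic(1)[OF hg] by simp
  show "tau_star (red (induced H S)) \<in> (\<lambda>S. tau_star (red (induced H S))) ` Pow (verts H)"
    using S by blast
qed

lemma rho_le_kappa:
  assumes hg: "hypergraph H"
  shows "rho_star H \<le> kappa H"
proof -
  define V where "V = verts H"
  define E where "E = edges H"
  have fV: "finite V" and fE: "finite E" and pE: "\<forall>e\<in>E. e \<noteq> {} \<and> e \<subseteq> V"
    and fe: "\<forall>e\<in>E. finite e" and cov: "\<forall>v\<in>V. \<exists>e\<in>E. v \<in> e"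
    using hg_basic[OF hg] by (simp_all add: V_def E_def)
  obtain w :: "'a set \<Rightarrow> real" and y :: "'a \<Rightarrow> real" where w0: "\<forall>e\<in>E. w e \<ge> 0" and y0: "\<forall>v\<in>V. y v \<ge> 0"
    and wc: "\<forall>v\<in>V. (\<Sum>e\<in>E. if v \<in> e then w e else 0) \<ge> 1"
    and yp: "\<forall>e\<in>E. (\<Sum>v\<in>V. if v \<in> e then y v else 0) \<le> 1"
    and ob: "(\<Sum>e\<in>E. w e) \<le> (\<Sum>v\<in>V. y v)"
    using dual_exists[OF fV fE cov] by blast
  define P where "P = (\<lambda>e. \<Sum>v\<in>V. if v \<in> e then y v else 0)"
  define Cv where "Cv = (\<lambda>v. \<Sum>e\<in>E. if v \<in> e then w e else 0)"
  have swap: "(\<Sum>e\<in>E. w e * P e) = (\<Sum>v\<in>V. y v * Cv v)"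
  proof -
    have "(\<Sum>e\<in>E. w e * P e) = (\<Sum>e\<in>E. \<Sum>v\<in>V. if v \<in> e then w e * y v else 0)"
      unfolding P_def sum_distrib_left by (rule sum.cong, simp, rule sum.cong, simp_all)
    also have "\<dots> = (\<Sum>v\<in>V. \<Sum>e\<in>E. if v \<in> e then w e * y v else 0)" by (rule sum.swap)
    also have "\<dots> = (\<Sum>v\<in>V. y v * Cv v)"
      unfolding Cv_def sum_distrib_left by (rule sum.cong, simp, rule sum.cong, simp_all)
    finally show ?thesis .
  qed
  define D1 where "D1 = (\<Sum>e\<in>E. w e * (1 - P e))"
  define D2 where "D2 = (\<Sum>v\<in>V. y v * (Cv v - 1))"
  have t1: "\<forall>e\<in>E. w e * (1 - P e) \<ge> 0" using w0 yp by (simp add: P_def)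
  have t2: "\<forall>v\<in>V. y v * (Cv v - 1) \<ge> 0" using y0 wc by (simp add: Cv_def)
  have "D1 + D2 = (\<Sum>e\<in>E. w e) - (\<Sum>v\<in>V. y v)"
  proof -
    have "D1 = (\<Sum>e\<in>E. w e) - (\<Sum>e\<in>E. w e * P e)"
      unfolding D1_def by (simp add: algebra_simps sum_subtractf)
    moreover have "D2 = (\<Sum>v\<in>V. y v * Cv v) - (\<Sum>v\<in>V. y v)"
      unfolding D2_def by (simp add: algebra_simps sum_subtractf)
    ultimately show ?thesis using swap by simp
  qed
  moreover have "D1 \<ge> 0" unfolding D1_def using t1 by (simp add: sum_nonneg)
  moreover have "D2 \<ge> 0" unfolding D2_def using t2 by (simp add: sum_nonneg)
  ultimately have "D1 = 0" "D2 = 0" using ob by linarith+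
  have z1: "\<forall>e\<in>E. w e * (1 - P e) = 0"
    using \<open>D1 = 0\<close> sum_nonneg_eq_0_iff[OF fE, of "\<lambda>e. w e * (1 - P e)"] t1 unfolding D1_def by blast
  have z2: "\<forall>v\<in>V. y v * (Cv v - 1) = 0"
    using \<open>D2 = 0\<close> sum_nonneg_eq_0_iff[OF fV, of "\<lambda>v. y v * (Cv v - 1)"] t2 unfolding D2_def by blast
  have cs1: "P e = 1" if "e \<in> E" "w e > 0" for e using z1 that by auto
  have cs2: "Cv v = 1" if "v \<in> V" "y v > 0" for v using z2 that by auto
  define S where "S = {v\<in>V. y v > 0}"
  have SV: "S \<subseteq> V" by (auto simp: S_def)
  have fS: "finite S" using SV fV finite_subset by blast
  have PS: "P e = (\<Sum>v\<in>S \<inter> e. y v)" if "e \<in> E" for e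
  proof -
    have "P e = (\<Sum>v\<in>V. if v \<in> S \<inter> e then y v else 0)"
      unfolding P_def by (rule sum.cong) (use y0 in \<open>auto simp: S_def\<close>)
    also have "\<dots> = (\<Sum>v\<in>S \<inter> e. y v)" by (rule sum_restrict_sub) (use SV fV in auto)
    finally show ?thesis .
  qed
  define ES where "ES = edges (induced H S)"
  define RS where "RS = edges (red (induced H S))"
  have ESdef: "ES = {S \<inter> e |e. e \<in> E \<and> S \<inter> e \<noteq> {}}" by (simp add: ES_def E_def)
  have RSdef: "RS = {f \<in> ES. \<not> (\<exists>f'\<in>ES. f' \<noteq> f \<and> f \<subseteq> f')}" by (simp add: RS_def ES_def)
  have ipr: "finite ES \<and> (\<forall>f\<in>ES. f \<noteq> {} \<and> f \<subseteq> verts (induced H S))"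
    unfolding ES_def by (rule induced_props) (use fE in \<open>simp add: E_def\<close>)
  have rpr: "finite RS \<and> (\<forall>f\<in>RS. f \<noteq> {} \<and> f \<subseteq> verts (red (induced H S)))"
    unfolding RS_def by (rule red_props) (use ipr in \<open>simp_all add: ES_def\<close>)
  have fES: "finite ES" using ipr by blast
  have fRS: "finite RS" using rpr by blast
  have RSsub: "RS \<subseteq> ES" by (auto simp: RSdef)
  have K3: "S \<inter> e \<in> RS" if eE: "e \<in> E" and wp: "w e > 0" for e
  proof -
    have Pe: "(\<Sum>v\<in>S \<inter> e. y v) = 1" using cs1[OF eE wp] PS[OF eE] by simp
    have ne: "S \<inter> e \<noteq> {}"
    proof
      assume "S \<inter> e = {}"
      then show False using Pe by simp
    qed
    have mx: "S \<inter> e' = S \<inter> e" if e'E: "e' \<in> E" and sub: "S \<inter> e \<subseteq> S \<inter> e'" for e'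
    proof (rule ccontr)
      assume neq: "S \<inter> e' \<noteq> S \<inter> e"
      have "P e' = (\<Sum>v\<in>S \<inter> e'. y v)" by (rule PS[OF e'E])
      also have "\<dots> = (\<Sum>v\<in>(S \<inter> e') - (S \<inter> e). y v) + (\<Sum>v\<in>S \<inter> e. y v)"
        by (rule sum.subset_diff) (use sub fS in auto)
      finally have "P e' = (\<Sum>v\<in>(S \<inter> e') - (S \<inter> e). y v) + 1" using Pe by simp
      moreover have "P e' \<le> 1" using yp e'E by (simp add: P_def)
      moreover have "(\<Sum>v\<in>(S \<inter> e') - (S \<inter> e). y v) > 0"
      proof (rule sum_pos)
        show "finite (S \<inter> e' - S \<inter> e)" using fS by simp
        show "S \<inter> e' - S \<inter> e \<noteq> {}" using sub neq by blast
        show "\<And>i. i \<in> S \<inter> e' - S \<inter> e \<Longrightarrow> 0 < y i" by (auto simp: S_def)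
      qed
      ultimately show False by linarith
    qed
    have inES: "S \<inter> e \<in> ES" using eE ne by (auto simp: ESdef)
    show ?thesis unfolding RSdef
    proof (intro CollectI conjI notI)
      show "S \<inter> e \<in> ES" by (rule inES)
      assume "\<exists>f'\<in>ES. f' \<noteq> S \<inter> e \<and> S \<inter> e \<subseteq> f'"
      then obtain f' where f': "f' \<in> ES" "f' \<noteq> S \<inter> e" "S \<inter> e \<subseteq> f'" by blast
      then obtain e' where e': "e' \<in> E" "f' = S \<inter> e'" by (auto simp: ESdef)
      show False using mx[OF e'(1)] f' e' by auto
    qed
  qed
  define u where "u = (\<lambda>f. \<Sum>e\<in>{e\<in>E. S \<inter> e = f}. w e)"
  have pack: "frac_packing (red (induced H S)) u"
    unfolding frac_packing_def
  proof (intro conjI ballI)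
    show "0 \<le> u f" for f unfolding u_def using w0 by (intro sum_nonneg) auto
    fix v assume "v \<in> verts (red (induced H S))"
    then have vS: "v \<in> S" by simp
    have "(\<Sum>f\<in>{f \<in> RS. v \<in> f}. u f) \<le> (\<Sum>f\<in>{f \<in> ES. v \<in> f}. u f)"
      by (rule sum_mono2) (use fES RSsub w0 in \<open>auto simp: u_def intro: sum_nonneg\<close>)
    also have "\<dots> = (\<Sum>e\<in>{e\<in>E. S \<inter> e \<in> {f \<in> ES. v \<in> f}}. w e)"
      unfolding u_def by (rule fiber_sum) (use fE fES in auto)
    also have "{e\<in>E. S \<inter> e \<in> {f \<in> ES. v \<in> f}} = {e\<in>E. v \<in> e}"
      using vS by (auto simp: ESdef)
    also have "(\<Sum>e\<in>{e\<in>E. v \<in> e}. w e) = Cv v"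
      unfolding Cv_def using fE by (simp add: sum.inter_filter)
    also have "\<dots> = 1" using cs2 vS by (auto simp: S_def)
    finally show "(\<Sum>f\<in>{f \<in> edges (red (induced H S)). v \<in> f}. u f) \<le> 1" by (simp add: RS_def)
  qed
  have val: "(\<Sum>e\<in>E. w e) \<le> (\<Sum>f\<in>RS. u f)"
  proof -
    have "(\<Sum>f\<in>RS. u f) = (\<Sum>e\<in>{e\<in>E. S \<inter> e \<in> RS}. w e)"
      unfolding u_def by (rule fiber_sum) (use fE fRS in auto)
    also have "\<dots> = (\<Sum>e\<in>E. w e)"
    proof (rule sum.mono_neutral_left)
      show "finite E" by (rule fE)
      show "{e \<in> E. S \<inter> e \<in> RS} \<subseteq> E" by auto
      show "\<forall>i\<in>E - {e \<in> E. S \<inter> e \<in> RS}. w i = 0"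
      proof
        fix i assume i: "i \<in> E - {e \<in> E. S \<inter> e \<in> RS}"
        then have "\<not> w i > 0" using K3 by blast
        then show "w i = 0" using w0 i by force
      qed
    qed
    finally show ?thesis by simp
  qed
  have cover: "frac_edge_cover H w"
    unfolding frac_edge_cover_def
  proof (intro conjI ballI)
    show "0 \<le> w e" if "e \<in> edges H" for e using w0 that by (simp add: E_def)
    fix v assume "v \<in> verts H"
    then have "1 \<le> Cv v" using wc by (simp add: Cv_def V_def)
    also have "Cv v = (\<Sum>e\<in>{e\<in>E. v \<in> e}. w e)"
      unfolding Cv_def using fE by (simp add: sum.inter_filter)
    finally show "1 \<le> (\<Sum>e\<in>{e \<in> edges H. v \<in> e}. w e)" by (simp add: E_def)
  qed
  have r1: "rho_star H \<le> (\<Sum>e\<in>E. w e)" using rho_lower[OF cover] unfolding E_def .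
  have rpr': "finite (edges (red (induced H S)))"
     "\<forall>f\<in>edges (red (induced H S)). f \<noteq> {} \<and> f \<subseteq> verts (red (induced H S))"
    using rpr unfolding RS_def by blast+
  have r3: "(\<Sum>f\<in>RS. u f) \<le> tau_star (red (induced H S))"
    using tau_upper[OF rpr' pack] unfolding RS_def .
  have SV': "S \<subseteq> verts H" using SV unfolding V_def .
  have r4: "tau_star (red (induced H S)) \<le> kappa H" by (rule kappa_ge[OF hg SV'])
  show ?thesis using r1 val r3 r4 by linarith
qed

theorem lemma3p6:
  fixes H :: "'a hypergraph"
  assumes "hypergraph H"
  shows "kappa H \<ge> tau_star (red H) \<and>
         (kappa H \<ge> rho_star (red H) \<and> rho_star (red H) = rho_star H) \<and>
         kappa H \<le> psi_star H"
proof -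
  note hg = assms
  have fV: "finite (verts H)" and fE: "finite (edges H)"
    and pE: "\<forall>e\<in>edges H. e \<noteq> {} \<and> e \<subseteq> verts H"
    using hg_basic[OF hg] by blast+
  have eq: "{verts H \<inter> e |e. e \<in> edges H \<and> verts H \<inter> e \<noteq> {}} = edges H"
  proof (intro equalityI subsetI)
    fix f assume "f \<in> {verts H \<inter> e |e. e \<in> edges H \<and> verts H \<inter> e \<noteq> {}}"
    then obtain e where e: "e \<in> edges H" "f = verts H \<inter> e" by blast
    then have "e \<subseteq> verts H" using pE by blast
    then show "f \<in> edges H" using e by (simp add: Int_absorb1)
  next
    fix f assume f: "f \<in> edges H"
    then have "f \<subseteq> verts H" "f \<noteq> {}" using pE by auto
    then have "verts H \<inter> f = f" by (simp add: Int_absorb1)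
    then show "f \<in> {verts H \<inter> e |e. e \<in> edges H \<and> verts H \<inter> e \<noteq> {}}"
      using f \<open>f \<noteq> {}\<close> by (metis (mono_tags, lifting) mem_Collect_eq)
  qed
  have ind: "induced H (verts H) = H"
    unfolding induced_def using eq by (simp add: verts_def edges_def)
  have c1: "tau_star (red H) \<le> kappa H"
    using kappa_ge[OF hg, of "verts H"] ind by simp
  have c2: "rho_star (red H) = rho_star H" by (rule rho_red_eq[OF hg])
  have c2': "rho_star (red H) \<le> kappa H" using c2 rho_le_kappa[OF hg] by simp
  have c3: "kappa H \<le> psi_star H"
    unfolding kappa_def
  proof (rule Max.boundedI)
    show "finite ((\<lambda>S. tau_star (red (induced H S))) ` Pow (verts H))" using fV by simp
    show "(\<lambda>S. tau_star (red (induced H S))) ` Pow (verts H) \<noteq> {}" by blast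
    fix a assume "a \<in> (\<lambda>S. tau_star (red (induced H S))) ` Pow (verts H)"
    then obtain S where S: "S \<subseteq> verts H" "a = tau_star (red (induced H S))" by blast
    have ip: "finite (edges (induced H S))"
      "\<forall>f\<in>edges (induced H S). f \<noteq> {} \<and> f \<subseteq> verts (induced H S)"
      using induced_props[OF fE, of S] by blast+
    have "a \<le> tau_star (induced H S)" using tau_red_le[OF ip] S(2) by simp
    also have "\<dots> \<le> psi_star H"
      unfolding psi_star_def by (rule Max_ge) (use fV S(1) in auto)
    finally show "a \<le> psi_star H" .
  qed
  show ?thesis using c1 c2 c2' c3 by blast
qed

end
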